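(* Let $\kappa\in[1/2,1)$ and let $T$ be a rooted binary tree with $n\ge1$ leaves in which every internal node has exactly two children and, at every internal node, $L\le\kappa N$ and $R\le\kappa N$, where $L$ and $R$ are the numbers of leaves in its left and right subtrees and $N=L+R$. Then the sum, over all leaves of $T$, of their depths is at most $\dfrac{n\log n}{H(\kappa)}$, where $H(\kappa)=-\kappa\log\kappa-(1-\kappa)\log(1-\kappa)$ (with the same logarithm base in numerator and $H$).
   Context: The depth of a leaf is the number of edges on the path from the root to that leaf. *)

theory Defs
  imports Complex_Main
begin

datatype btree = Leaf | Node btree btree

fun leaves :: "btree \<Rightarrow> nat" where
  "leaves Leaf = 1"
| "leaves (Node l r) = leaves l + leaves r"

text \<open>Multiset of leaf depths (depth = number of edges from the root).\<close>
fun leaf_depths :: "btree \<Rightarrow> nat list" where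
  "leaf_depths Leaf = [0]"
| "leaf_depths (Node l r) = map Suc (leaf_depths l @ leaf_depths r)"

definition depth_sum :: "btree \<Rightarrow> nat" where
  "depth_sum t = sum_list (leaf_depths t)"

fun balanced :: "real \<Rightarrow> btree \<Rightarrow> bool" where
  "balanced k Leaf = True"
| "balanced k (Node l r) =
     (real (leaves l) \<le> k * real (leaves l + leaves r) \<and>
      real (leaves r) \<le> k * real (leaves l + leaves r) \<and>
      balanced k l \<and> balanced k r)"

text \<open>Binary entropy (natural logarithm; the base cancels in the bound).\<close>
definition H :: "real \<Rightarrow> real" where
  "H k = - k * ln k - (1 - k) * ln (1 - k)"

end

theory Submission
  imports Defs
begin

lemma len_ld: "length (leaf_depths t) = leaves t"
  by (induction t) auto

lemma sum_map_Suc: "sum_list (map Suc xs) = sum_list xs + length xs"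
  by (induction xs) auto

lemma ds_node: "depth_sum (Node l r) = depth_sum l + depth_sum r + leaves l + leaves r"
  by (simp add: depth_sum_def sum_map_Suc len_ld)

lemma leaves_pos: "leaves t \<ge> 1"
  by (induction t) auto

lemma H_sym: "H (1 - p) = H p"
  by (simp add: H_def algebra_simps)

lemma H_dec:
  assumes "1/2 \<le> p" "p \<le> k" "k < 1"
  shows "H k \<le> H p"
proof (rule DERIV_nonpos_imp_decreasing_open[OF assms(2)])
  fix x assume x: "p < x" "x < k"
  hence x0: "0 < x" "x < 1" "1/2 < x" using assms by auto
  have "DERIV H x :> (ln (1 - x) - ln x)"
    unfolding H_def
    by (rule derivative_eq_intros refl | use x0 in simp)+
  moreover have "ln (1 - x) - ln x \<le> 0" using x0 by simp
  ultimately show "\<exists>y. DERIV H x :> y \<and> y \<le> 0" by blast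
next
  show "continuous_on {p..k} H"
    unfolding H_def using assms
    by (intro continuous_intros) auto
qed

lemma H_ge:
  assumes "1 - k \<le> p" "p \<le> k" "1/2 \<le> k" "k < 1"
  shows "H k \<le> H p"
proof (cases "p \<ge> 1/2")
  case True thus ?thesis using H_dec assms by auto
next
  case False
  hence "H k \<le> H (1 - p)" using H_dec[of "1-p" k] assms by auto
  thus ?thesis by (simp add: H_sym)
qed

lemma H_pos: "0 < k \<Longrightarrow> k < 1 \<Longrightarrow> 0 < H k"
  unfolding H_def
proof -
  assume "0 < k" "k < 1"
  hence "ln k < 0" "ln (1 - k) < 0" by auto
  hence "k * ln k < 0" "(1-k) * ln (1-k) < 0"
    using \<open>0 < k\<close> \<open>k < 1\<close> by (auto simp: mult_pos_neg)
  thus "0 < - k * ln k - (1 - k) * ln (1 - k)" by simp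
qed

lemma main:
  assumes "1/2 \<le> k" "k < 1" "balanced k T"
  shows "H k * real (depth_sum T) \<le> real (leaves T) * ln (real (leaves T))"
  using assms(3)
proof (induction T)
  case Leaf thus ?case by (simp add: depth_sum_def)
next
  case (Node l r)
  define a where "a = real (leaves l)"
  define b where "b = real (leaves r)"
  define n where "n = a + b"
  have a1: "a \<ge> 1" "b \<ge> 1" using leaves_pos a_def b_def by auto
  have n0: "n > 0" using a1 n_def by auto
  have IH: "H k * real (depth_sum l) \<le> a * ln a" "H k * real (depth_sum r) \<le> b * ln b"
    using Node a_def b_def by auto
  have bal: "a \<le> k * n" "b \<le> k * n" using Node.prems a_def b_def n_def by auto
  define p where "p = a / n"
  have p1: "p \<le> k" using bal n0 by (simp add: p_def divide_simps)
  have "1 - p = b / n" using n0 by (simp add: p_def n_def field_simps)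
  hence "(1 - p) * n \<le> k * n" using bal n0 by simp
  hence "1 - p \<le> k" using n0 by (meson mult_right_le_imp_le)
  hence p2: "1 - k \<le> p" by simp
  have Hp: "H k \<le> H p" using H_ge[OF p2 p1 assms(1,2)] .
  have "n * H p = - a * ln (a/n) - b * ln (b/n)"
  proof -
    have "n * p = a" "n * (1 - p) = b" using \<open>1 - p = b / n\<close> n0 by (simp_all add: p_def)
    have "n * H p = - (n * p) * ln p - (n * (1 - p)) * ln (1 - p)"
      by (simp add: H_def algebra_simps)
    thus ?thesis using \<open>n * p = a\<close> \<open>n * (1 - p) = b\<close> \<open>1 - p = b / n\<close> p_def by simp
  qed
  also have "\<dots> = n * ln n - a * ln a - b * ln b"
    using a1 n0 by (simp add: ln_div n_def algebra_simps)
  finally have eq: "n * H p = n * ln n - a * ln a - b * ln b" .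
  have "H k * real (depth_sum (Node l r)) = H k * real (depth_sum l) + H k * real (depth_sum r) + H k * n"
    by (simp add: ds_node a_def b_def n_def algebra_simps)
  also have "\<dots> \<le> a * ln a + b * ln b + n * H p"
    using IH Hp n0 by (smt (verit) mult.commute mult_left_mono)
  also have "\<dots> = n * ln n" using eq by simp
  finally show ?case by (simp add: a_def b_def n_def)
qed

theorem theorem4:
  fixes \<kappa> :: real and T :: btree
  assumes "1/2 \<le> \<kappa>" and "\<kappa> < 1"
    and "balanced \<kappa> T"
  shows "real (depth_sum T) \<le> real (leaves T) * ln (real (leaves T)) / H \<kappa>"
proof -
  have "0 < H \<kappa>" using H_pos assms by auto
  thus ?thesis using main[OF assms] by (simp add: pos_le_divide_eq mult.commute)
qed

end
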